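(* Let $K$ be a number field, $a_1,a_2,e\ge 0$ integers, and let $X$ be the smooth surface of bidegree $(e,2)$ in $\mathbb{F}(0,a_1,a_2)$ cut out by $Q_{(s,t)}(\mathbf{x}) = \sum_{0\le i,j\le 2} f_{i,j}(s,t)x_ix_j$ with $f_{i,j}=f_{j,i}\in\mathcal{O}_K[s,t]$ binary forms of degree $a_i+a_j+e$ ($a_0=0$), with conic bundle $\pi:(s:t;\mathbf{x})\mapsto(s:t)$ and $\Delta(s,t) = -4\det(f_{i,j}(s,t))$, and assume $t \nmid \Delta(s,t)$. Let $p$ be a closed point of $\mathbb{P}^1_K$ with singular fibre $X_p$, with associated $\theta_p$ and $\delta_p$ as in the context. Then $\delta_p(\theta_p,1) \neq 0$, and the fibre $X_p$ is split over $K(p)$ if and only if $\delta_p(\theta_p,1)$ is a square in $K(p)$.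
   Context: Closed points $p$ with singular fibre correspond to irreducible factors $\Delta_p(s,t) \in \mathcal{O}_K[s,t]$ of $\Delta(s,t)$ (up to constants), with $\Delta_p(1,0)\neq 0$; the residue field $K(p)$ is generated over $K$ by a root $\theta_p \in \overline{K}$ of $\Delta_p(s,1)$. The plane conic $C_{(\theta_p,1)}: Q_{(\theta_p,1)}(\mathbf{x}) = 0$ over $K(p)$ is isomorphic to $X_p$ and is singular, with a unique singular point; let $i_p \in \{0,1,2\}$ be the index of the first nonzero coordinate of that point. Then $\delta_p(s,t) \in \mathcal{O}_K[s,t]$ is the discriminant of the binary quadratic form in the two remaining variables obtained by setting $x_{i_p} = 0$ in $Q_{(s,t)}(x_0,x_1,x_2)$, where the discriminant of $\alpha y^2 + \beta yz + \gamma z^2$ is $\beta^2 - 4\alpha\gamma$. A conic over a field is split if it is smooth or is a union of two lines defined over that field. $\mathbb{F}(0,a_1,a_2)$ is the $\mathbb{P}^2$-bundle $\mathbb{P}(\mathcal{O}\oplus\mathcal{O}(a_1)\oplus\mathcal{O}(a_2))$ over $\mathbb{P}^1$, with bidegree conventions so that $f_{i,j}$ has degree $a_i+a_j+e$. *)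

theory Defs
  imports "HOL-Computational_Algebra.Polynomial"
begin

definition is_subfield :: "complex set \<Rightarrow> bool" where
  "is_subfield F \<longleftrightarrow> 0 \<in> F \<and> 1 \<in> F \<and>
     (\<forall>x\<in>F. \<forall>y\<in>F. x + y \<in> F \<and> x * y \<in> F) \<and>
     (\<forall>x\<in>F. - x \<in> F) \<and> (\<forall>x\<in>F. x \<noteq> 0 \<longrightarrow> inverse x \<in> F)"

definition number_field :: "complex set \<Rightarrow> bool" where
  "number_field K \<longleftrightarrow> is_subfield K \<and>
     (\<exists>B. finite B \<and> B \<subseteq> K \<and>
        K \<subseteq> {\<Sum>b\<in>B. of_rat (q b) * b | q :: complex \<Rightarrow> rat. True})"

definition algebraic_integer :: "complex \<Rightarrow> bool" where
  "algebraic_integer x \<longleftrightarrow>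
     (\<exists>p :: int poly. lead_coeff p = 1 \<and> poly (map_poly of_int p) x = 0)"

definition ring_of_integers :: "complex set \<Rightarrow> complex set" where
  "ring_of_integers K = {x \<in> K. algebraic_integer x}"

definition gen_field :: "complex set \<Rightarrow> complex \<Rightarrow> complex set" where
  "gen_field K \<theta> = \<Inter> {F. is_subfield F \<and> K \<subseteq> F \<and> \<theta> \<in> F}"

definition bf :: "nat \<Rightarrow> (nat \<Rightarrow> complex) \<Rightarrow> complex \<Rightarrow> complex \<Rightarrow> complex" where
  "bf d c s t = (\<Sum>k\<le>d. c k * s ^ k * t ^ (d - k))"

definition bf_ds :: "nat \<Rightarrow> (nat \<Rightarrow> complex) \<Rightarrow> complex \<Rightarrow> complex \<Rightarrow> complex" where
  "bf_ds d c s t = (\<Sum>k\<le>d. of_nat k * c k * s ^ (k - 1) * t ^ (d - k))"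

definition bf_dt :: "nat \<Rightarrow> (nat \<Rightarrow> complex) \<Rightarrow> complex \<Rightarrow> complex \<Rightarrow> complex" where
  "bf_dt d c s t = (\<Sum>k\<le>d. of_nat (d - k) * c k * s ^ k * t ^ (d - k - 1))"

definition aidx :: "nat \<Rightarrow> nat \<Rightarrow> nat \<Rightarrow> nat" where
  "aidx a1 a2 i = (if i = 0 then 0 else if i = 1 then a1 else a2)"

definition wdeg :: "nat \<Rightarrow> nat \<Rightarrow> nat \<Rightarrow> nat \<Rightarrow> nat \<Rightarrow> nat" where
  "wdeg a1 a2 e i j = aidx a1 a2 i + aidx a1 a2 j + e"

text \<open>\<open>c i j k\<close> is the coefficient of \<open>s^k t^(deg - k)\<close> in \<open>f_{i,j}\<close>.\<close>
definition fij :: "nat \<Rightarrow> nat \<Rightarrow> nat \<Rightarrow> (nat \<Rightarrow> nat \<Rightarrow> nat \<Rightarrow> complex)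
    \<Rightarrow> nat \<Rightarrow> nat \<Rightarrow> complex \<Rightarrow> complex \<Rightarrow> complex" where
  "fij a1 a2 e c i j s t = bf (wdeg a1 a2 e i j) (c i j) s t"

definition Qform :: "nat \<Rightarrow> nat \<Rightarrow> nat \<Rightarrow> (nat \<Rightarrow> nat \<Rightarrow> nat \<Rightarrow> complex)
    \<Rightarrow> complex \<Rightarrow> complex \<Rightarrow> (nat \<Rightarrow> complex) \<Rightarrow> complex" where
  "Qform a1 a2 e c s t x = (\<Sum>i<3. \<Sum>j<3. fij a1 a2 e c i j s t * x i * x j)"

definition Q_ds :: "nat \<Rightarrow> nat \<Rightarrow> nat \<Rightarrow> (nat \<Rightarrow> nat \<Rightarrow> nat \<Rightarrow> complex)
    \<Rightarrow> complex \<Rightarrow> complex \<Rightarrow> (nat \<Rightarrow> complex) \<Rightarrow> complex" where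
  "Q_ds a1 a2 e c s t x =
     (\<Sum>i<3. \<Sum>j<3. bf_ds (wdeg a1 a2 e i j) (c i j) s t * x i * x j)"

definition Q_dt :: "nat \<Rightarrow> nat \<Rightarrow> nat \<Rightarrow> (nat \<Rightarrow> nat \<Rightarrow> nat \<Rightarrow> complex)
    \<Rightarrow> complex \<Rightarrow> complex \<Rightarrow> (nat \<Rightarrow> complex) \<Rightarrow> complex" where
  "Q_dt a1 a2 e c s t x =
     (\<Sum>i<3. \<Sum>j<3. bf_dt (wdeg a1 a2 e i j) (c i j) s t * x i * x j)"

definition Q_dx :: "nat \<Rightarrow> nat \<Rightarrow> nat \<Rightarrow> (nat \<Rightarrow> nat \<Rightarrow> nat \<Rightarrow> complex)
    \<Rightarrow> complex \<Rightarrow> complex \<Rightarrow> (nat \<Rightarrow> complex) \<Rightarrow> nat \<Rightarrow> complex" where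
  "Q_dx a1 a2 e c s t x m =
     (\<Sum>j<3. (fij a1 a2 e c m j s t + fij a1 a2 e c j m s t) * x j)"

text \<open>Smoothness of \<open>X\<close> (Jacobian criterion at every geometric point
  \<open>(s:t; x)\<close>, \<open>(s,t) \<noteq> 0\<close>, \<open>x \<noteq> 0\<close>, of the projective bundle).\<close>
definition smooth_X :: "nat \<Rightarrow> nat \<Rightarrow> nat \<Rightarrow> (nat \<Rightarrow> nat \<Rightarrow> nat \<Rightarrow> complex) \<Rightarrow> bool" where
  "smooth_X a1 a2 e c \<longleftrightarrow>
     (\<forall>s t x. (s, t) \<noteq> (0, 0) \<and> (\<exists>i<3. x i \<noteq> 0) \<and> Qform a1 a2 e c s t x = 0 \<and>
        (\<forall>m<3. Q_dx a1 a2 e c s t x m = 0)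
        \<longrightarrow> Q_ds a1 a2 e c s t x \<noteq> 0 \<or> Q_dt a1 a2 e c s t x \<noteq> 0)"

definition det3 :: "(nat \<Rightarrow> nat \<Rightarrow> complex) \<Rightarrow> complex" where
  "det3 M = M 0 0 * (M 1 1 * M 2 2 - M 1 2 * M 2 1)
          - M 0 1 * (M 1 0 * M 2 2 - M 1 2 * M 2 0)
          + M 0 2 * (M 1 0 * M 2 1 - M 1 1 * M 2 0)"

definition Delta :: "nat \<Rightarrow> nat \<Rightarrow> nat \<Rightarrow> (nat \<Rightarrow> nat \<Rightarrow> nat \<Rightarrow> complex)
    \<Rightarrow> complex \<Rightarrow> complex \<Rightarrow> complex" where
  "Delta a1 a2 e c s t = - 4 * det3 (\<lambda>i j. fij a1 a2 e c i j s t)"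

definition conic_val :: "(nat \<Rightarrow> nat \<Rightarrow> complex) \<Rightarrow> (nat \<Rightarrow> complex) \<Rightarrow> complex" where
  "conic_val C x = (\<Sum>i<3. \<Sum>j<3. C i j * x i * x j)"

definition conic_sing_pt :: "(nat \<Rightarrow> nat \<Rightarrow> complex) \<Rightarrow> (nat \<Rightarrow> complex) \<Rightarrow> bool" where
  "conic_sing_pt C x \<longleftrightarrow> (\<exists>i<3. x i \<noteq> 0) \<and> conic_val C x = 0 \<and>
     (\<forall>i<3. (\<Sum>j<3. (C i j + C j i) * x j) = 0)"

definition conic_smooth :: "(nat \<Rightarrow> nat \<Rightarrow> complex) \<Rightarrow> bool" where
  "conic_smooth C \<longleftrightarrow> \<not> (\<exists>x. conic_sing_pt C x)"

text \<open>A conic is split over \<open>L\<close> if it is smooth, or is a union of two lines defined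
  over \<open>L\<close> (i.e. its equation factors into two linear forms with coefficients in \<open>L\<close>).\<close>
definition conic_split :: "complex set \<Rightarrow> (nat \<Rightarrow> nat \<Rightarrow> complex) \<Rightarrow> bool" where
  "conic_split L C \<longleftrightarrow> conic_smooth C \<or>
     (\<exists>u v. (\<forall>i<3. u i \<in> L \<and> v i \<in> L) \<and> (\<exists>i<3. u i \<noteq> 0) \<and> (\<exists>i<3. v i \<noteq> 0) \<and>
        (\<forall>x. conic_val C x = (\<Sum>i<3. u i * x i) * (\<Sum>i<3. v i * x i)))"

definition sing_index :: "(nat \<Rightarrow> nat \<Rightarrow> complex) \<Rightarrow> nat" where
  "sing_index C = (LEAST i. \<exists>x. conic_sing_pt C x \<and> x i \<noteq> 0 \<and> (\<forall>j<i. x j = 0))"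

definition other_idx :: "nat \<Rightarrow> nat \<times> nat" where
  "other_idx i = (if i = 0 then (1, 2) else if i = 1 then (0, 2) else (0, 1))"

text \<open>Discriminant \<open>\<beta>^2 - 4\<alpha>\<gamma>\<close> of the binary quadratic form obtained by setting
  \<open>x_i = 0\<close> in \<open>\<Sum> F j k x_j x_k\<close>.\<close>
definition disc_restr :: "(nat \<Rightarrow> nat \<Rightarrow> complex) \<Rightarrow> nat \<Rightarrow> complex" where
  "disc_restr F i = (let (j, k) = other_idx i in
     (F j k + F k j) ^ 2 - 4 * F j j * F k k)"

definition fibre_conic :: "nat \<Rightarrow> nat \<Rightarrow> nat \<Rightarrow> (nat \<Rightarrow> nat \<Rightarrow> nat \<Rightarrow> complex)
    \<Rightarrow> complex \<Rightarrow> nat \<Rightarrow> nat \<Rightarrow> complex" where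
  "fibre_conic a1 a2 e c \<theta> = (\<lambda>i j. fij a1 a2 e c i j \<theta> 1)"

definition delta_p_at :: "nat \<Rightarrow> nat \<Rightarrow> nat \<Rightarrow> (nat \<Rightarrow> nat \<Rightarrow> nat \<Rightarrow> complex)
    \<Rightarrow> complex \<Rightarrow> complex" where
  "delta_p_at a1 a2 e c \<theta> =
     disc_restr (\<lambda>i j. fij a1 a2 e c i j \<theta> 1) (sing_index (fibre_conic a1 a2 e c \<theta>))"

end

theory Submission
  imports Defs
begin


definition qf :: "(nat \<Rightarrow> nat \<Rightarrow> complex) \<Rightarrow> (nat \<Rightarrow> complex) \<Rightarrow> complex" where
  "qf N x = (\<Sum>i<3. \<Sum>j<3. N i j * x i * x j)"

lemma sum3: "(\<Sum>i<(3::nat). f i) = f 0 + f 1 + (f 2 :: 'a::comm_monoid_add)"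
proof -
  have "{..<(3::nat)} = {0,1,2}" by auto
  then show ?thesis by (simp add: ac_simps)
qed
lemma sum3ijk:
  assumes "i < (3::nat)" "j < 3" "k < 3" "i \<noteq> j" "i \<noteq> k" "j \<noteq> k"
  shows "(\<Sum>l<3. f l) = f i + f j + (f k :: 'a::comm_monoid_add)"
proof -
  have "{..<3} = {i,j,k}" using assms by auto
  then show ?thesis using assms by (simp add: add.assoc)
qed
definition nz :: "(nat \<Rightarrow> complex) \<Rightarrow> bool" where "nz x \<longleftrightarrow> (\<exists>i<3. x i \<noteq> 0)"
definition kerM :: "(nat \<Rightarrow> nat \<Rightarrow> complex) \<Rightarrow> (nat \<Rightarrow> complex) \<Rightarrow> bool" where
  "kerM M x \<longleftrightarrow> (\<forall>r<3. (\<Sum>s<3. M r s * x s) = 0)"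
lemma nz_intro: "i < 3 \<Longrightarrow> x i \<noteq> 0 \<Longrightarrow> nz x"
  unfolding nz_def by blast

lemma ker_mk:
  assumes "a \<noteq> 0 \<or> b \<noteq> 0 \<or> c \<noteq> 0" "M 0 0 * a + M 0 1 * b + M 0 2 * c = 0"
     "M 1 0 * a + M 1 1 * b + M 1 2 * c = 0" "M 2 0 * a + M 2 1 * b + M 2 2 * c = 0"
  shows "\<exists>x. nz x \<and> kerM M x"
proof (intro exI conjI)
  let ?x = "\<lambda>l::nat. if l = 0 then a else if l = 1 then b else c"
  have h: "?x 0 \<noteq> 0 \<or> ?x 1 \<noteq> 0 \<or> ?x 2 \<noteq> 0" using assms(1) by simp
  show "nz ?x" using h nz_intro[of 0 ?x] nz_intro[of 1 ?x] nz_intro[of 2 ?x] by auto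
  show "kerM M ?x" unfolding kerM_def
  proof (intro allI impI)
    fix r :: nat assume "r < 3"
    then have "r = 0 \<or> r = 1 \<or> r = 2" by auto
    then show "(\<Sum>s<3. M r s * ?x s) = 0" using assms by (auto simp: sum3)
  qed
qed
lemma ker_exists:
  assumes "det3 M = 0"
  shows "\<exists>x. nz x \<and> kerM M x"
proof -
  have d: "M 0 0 * (M 1 1 * M 2 2 - M 1 2 * M 2 1) - M 0 1 * (M 1 0 * M 2 2 - M 1 2 * M 2 0)
          + M 0 2 * (M 1 0 * M 2 1 - M 1 1 * M 2 0) = 0" using assms unfolding det3_def .
  show ?thesis
  proof (cases "M 1 1 * M 2 2 - M 1 2 * M 2 1 \<noteq> 0 \<or> -(M 1 0 * M 2 2 - M 1 2 * M 2 0) \<noteq> 0 \<or> M 1 0 * M 2 1 - M 1 1 * M 2 0 \<noteq> 0")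
    case True
    show ?thesis apply (rule ker_mk[OF True]) apply (use d in algebra) apply algebra by algebra
  next
    case F0: False
    show ?thesis
    proof (cases "-(M 0 1 * M 2 2 - M 0 2 * M 2 1) \<noteq> 0 \<or> M 0 0 * M 2 2 - M 0 2 * M 2 0 \<noteq> 0 \<or> -(M 0 0 * M 2 1 - M 0 1 * M 2 0) \<noteq> 0")
      case True
      show ?thesis apply (rule ker_mk[OF True]) 
          apply algebra apply (use d in algebra) by algebra
    next
      case F1: False
      show ?thesis
      proof (cases "M 0 1 * M 1 2 - M 0 2 * M 1 1 \<noteq> 0 \<or> -(M 0 0 * M 1 2 - M 0 2 * M 1 0) \<noteq> 0 \<or> M 0 0 * M 1 1 - M 0 1 * M 1 0 \<noteq> 0")
        case True
        show ?thesis apply (rule ker_mk[OF True]) 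
          apply algebra apply algebra by (use d in algebra)
      next
        case F2: False
        have z: "M 1 1 * M 2 2 = M 1 2 * M 2 1" "M 0 1 * M 2 2 = M 0 2 * M 2 1" "M 0 1 * M 1 2 = M 0 2 * M 1 1"
          "M 1 0 * M 2 2 = M 1 2 * M 2 0" "M 0 0 * M 2 2 = M 0 2 * M 2 0" "M 0 0 * M 1 2 = M 0 2 * M 1 0"
          "M 1 0 * M 2 1 = M 1 1 * M 2 0" "M 0 0 * M 2 1 = M 0 1 * M 2 0" "M 0 0 * M 1 1 = M 0 1 * M 1 0"
          using F0 F1 F2 by auto
        consider (a0) "M 0 0 \<noteq> 0 \<or> M 0 1 \<noteq> 0" | (a1) "M 1 0 \<noteq> 0 \<or> M 1 1 \<noteq> 0"
          | (a2) "M 2 0 \<noteq> 0 \<or> M 2 1 \<noteq> 0" | (b0) "M 0 2 \<noteq> 0" | (b1) "M 1 2 \<noteq> 0" | (b2) "M 2 2 \<noteq> 0"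
          | (c) "\<forall>r s. r \<in> {0,1,2::nat} \<longrightarrow> s \<in> {0,1,2::nat} \<longrightarrow> M r s = 0" by auto
        then show ?thesis
        proof cases
          case a0 then have nz: "M 0 1 \<noteq> 0 \<or> - M 0 0 \<noteq> 0 \<or> (0::complex) \<noteq> 0" by auto
          show ?thesis apply (rule ker_mk[OF nz]) apply algebra apply (use z(9) in algebra) by (use z(8) in algebra)
        next
          case a1 then have nz: "M 1 1 \<noteq> 0 \<or> - M 1 0 \<noteq> 0 \<or> (0::complex) \<noteq> 0" by auto
          show ?thesis apply (rule ker_mk[OF nz]) apply (use z(9) in algebra) apply algebra by (use z(7) in algebra)
        next
          case a2 then have nz: "M 2 1 \<noteq> 0 \<or> - M 2 0 \<noteq> 0 \<or> (0::complex) \<noteq> 0" by auto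
          show ?thesis apply (rule ker_mk[OF nz]) apply (use z(8) in algebra) apply (use z(7) in algebra) by algebra
        next
          case b0 then have nz: "M 0 2 \<noteq> 0 \<or> (0::complex) \<noteq> 0 \<or> - M 0 0 \<noteq> 0" by auto
          show ?thesis apply (rule ker_mk[OF nz]) apply algebra apply (use z(6) in algebra) by (use z(5) in algebra)
        next
          case b1 then have nz: "M 1 2 \<noteq> 0 \<or> (0::complex) \<noteq> 0 \<or> - M 1 0 \<noteq> 0" by auto
          show ?thesis apply (rule ker_mk[OF nz]) apply (use z(6) in algebra) apply algebra by (use z(4) in algebra)
        next
          case b2 then have nz: "M 2 2 \<noteq> 0 \<or> (0::complex) \<noteq> 0 \<or> - M 2 0 \<noteq> 0" by auto
          show ?thesis apply (rule ker_mk[OF nz]) apply (use z(5) in algebra) apply (use z(4) in algebra) by algebra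
        next
          case c
          have nz: "(1::complex) \<noteq> 0 \<or> (0::complex) \<noteq> 0 \<or> (0::complex) \<noteq> 0" by simp
          from c show ?thesis by (intro ker_mk[OF nz]) auto
        qed
      qed
    qed
  qed
qed



lemma quad_root:
  fixes a b c :: complex
  assumes "a \<noteq> 0"
  shows "\<exists>l. a * l^2 + b * l + c = 0"
proof -
  define s where "s = csqrt (b^2 - 4*a*c)"
  have s2: "s^2 = b^2 - 4*a*c" unfolding s_def by simp
  define l where "l = (-b + s) / (2*a)"
  have "a * l^2 + b * l + c = (s^2 - (b^2 - 4*a*c)) / (4*a)"
    unfolding l_def using assms by (simp add: field_simps power2_eq_square)
  also have "\<dots> = 0" using s2 by simp
  finally show ?thesis by blast
qed

lemma qf_comb:
  "qf N (\<lambda>l. t * u l + w l) = t^2 * qf N u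
     + t * (\<Sum>i<3. \<Sum>j<3. N i j * (u i * w j + w i * u j)) + qf N w"
  unfolding qf_def sum3 by algebra

lemma ker_comb:
  assumes "kerM M u" "kerM M w"
  shows "kerM M (\<lambda>l. t * u l + w l)"
  using assms unfolding kerM_def
  by (simp add: distrib_left sum.distrib mult.left_commute[of _ t] flip: sum_distrib_left)

lemma ker_line:
  assumes nv: "\<forall>x. nz x \<and> kerM M x \<longrightarrow> qf N x \<noteq> 0"
    and u: "nz u" "kerM M u" and w: "kerM M w"
  shows "\<exists>l. \<forall>i<3. w i = l * u i"
proof -
  have a: "qf N u \<noteq> 0" using nv u by blast
  obtain t where t: "qf N u * t^2 + (\<Sum>i<3. \<Sum>j<3. N i j * (u i * w j + w i * u j)) * t + qf N w = 0"
    using quad_root[OF a] by blast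
  have q0: "qf N (\<lambda>l. t * u l + w l) = 0" unfolding qf_comb using t by (simp add: algebra_simps)
  have k: "kerM M (\<lambda>l. t * u l + w l)" using ker_comb[OF u(2) w] .
  have "\<not> nz (\<lambda>l. t * u l + w l)" using nv q0 k by blast
  then have "\<forall>i<3. t * u i + w i = 0" unfolding nz_def by auto
  then have "\<forall>i<3. w i = (-t) * u i" by (metis add_eq_0_iff mult_minus_left) 
  then show ?thesis by blast
qed



lemma sf_mem: "x \<in> gen_field K th \<longleftrightarrow> (\<forall>F. is_subfield F \<and> K \<subseteq> F \<and> th \<in> F \<longrightarrow> x \<in> F)"
  unfolding gen_field_def by auto

lemma gen_field_in: "x \<in> gen_field K th \<Longrightarrow> is_subfield F \<Longrightarrow> K \<subseteq> F \<Longrightarrow> th \<in> F \<Longrightarrow> x \<in> F"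
  unfolding sf_mem by blast

lemma gen_field_subfield: "is_subfield (gen_field K th)"
proof -
  let ?L = "gen_field K th"
  have z: "0 \<in> ?L" "1 \<in> ?L" unfolding sf_mem is_subfield_def by blast+
  have a: "x + y \<in> ?L \<and> x * y \<in> ?L" if "x \<in> ?L" "y \<in> ?L" for x y
    unfolding sf_mem
  proof (intro allI impI conjI)
    fix F assume F: "is_subfield F \<and> K \<subseteq> F \<and> th \<in> F"
    then have "x \<in> F" "y \<in> F" using gen_field_in that by blast+
    then show "x + y \<in> F" "x * y \<in> F" using F unfolding is_subfield_def by blast+
  qed
  have m: "- x \<in> ?L" if "x \<in> ?L" for x
    unfolding sf_mem
  proof (intro allI impI)
    fix F assume F: "is_subfield F \<and> K \<subseteq> F \<and> th \<in> F"
    then have "x \<in> F" using gen_field_in that by blast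
    then show "- x \<in> F" using F unfolding is_subfield_def by blast
  qed
  have v: "inverse x \<in> ?L" if "x \<in> ?L" "x \<noteq> 0" for x
    unfolding sf_mem
  proof (intro allI impI)
    fix F assume F: "is_subfield F \<and> K \<subseteq> F \<and> th \<in> F"
    then have "x \<in> F" using gen_field_in that by blast
    then show "inverse x \<in> F" using F that(2) unfolding is_subfield_def by blast
  qed
  show ?thesis unfolding is_subfield_def using z a m v by blast
qed

lemma gen_field_K: "K \<subseteq> gen_field K th"
  using sf_mem by blast

lemma gen_field_th: "th \<in> gen_field K th"
  unfolding sf_mem by auto

context
  fixes F :: "complex set"
  assumes F: "is_subfield F"
begin
lemma sf_0: "0 \<in> F" and sf_1: "1 \<in> F" using F unfolding is_subfield_def by auto
lemma sf_add: "x \<in> F \<Longrightarrow> y \<in> F \<Longrightarrow> x + y \<in> F" using F unfolding is_subfield_def by auto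
lemma sf_mult: "x \<in> F \<Longrightarrow> y \<in> F \<Longrightarrow> x * y \<in> F" using F unfolding is_subfield_def by auto
lemma sf_uminus: "x \<in> F \<Longrightarrow> - x \<in> F" using F unfolding is_subfield_def by auto
lemma sf_diff: "x \<in> F \<Longrightarrow> y \<in> F \<Longrightarrow> x - y \<in> F"
  using sf_add[of x "-y"] sf_uminus[of y] by simp
lemma sf_inverse: "x \<in> F \<Longrightarrow> inverse x \<in> F"
  using F sf_0 unfolding is_subfield_def by (cases "x = 0") auto
lemma sf_divide: "x \<in> F \<Longrightarrow> y \<in> F \<Longrightarrow> x / y \<in> F"
  using sf_mult[of x "inverse y"] sf_inverse[of y] by (simp add: divide_inverse)
lemma sf_power: "x \<in> F \<Longrightarrow> x ^ n \<in> F"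
  by (induction n) (auto intro: sf_1 sf_mult)
lemma sf_sum: "(\<And>k. k \<in> A \<Longrightarrow> f k \<in> F) \<Longrightarrow> sum f A \<in> F"
  by (induction A rule: infinite_finite_induct) (auto intro: sf_0 sf_add)
lemma sf_of_nat: "of_nat n \<in> F"
  by (induction n) (auto intro: sf_0 sf_1 sf_add)
lemma sf_numeral: "numeral n \<in> F"
  using sf_of_nat[of "numeral n"] by simp
end

lemma bf_euler: "s * bf_ds d c s t + t * bf_dt d c s t = of_nat d * bf d c s t"
proof -
  have "s * bf_ds d c s t + t * bf_dt d c s t
      = (\<Sum>k\<le>d. s * (of_nat k * c k * s ^ (k - 1) * t ^ (d - k)) + t * (of_nat (d - k) * c k * s ^ k * t ^ (d - k - 1)))"
    unfolding bf_ds_def bf_dt_def by (simp add: sum_distrib_left sum.distrib)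
  also have "\<dots> = (\<Sum>k\<le>d. of_nat d * (c k * s ^ k * t ^ (d - k)))"
  proof (rule sum.cong[OF refl])
    fix k assume "k \<in> {..d}"
    then have kd: "k \<le> d" by simp
    have 1: "of_nat k * (s * s ^ (k - 1)) = (of_nat k * s ^ k :: complex)" by (cases k) auto
    have 2: "of_nat (d - k) * (t * t ^ (d - k - 1)) = (of_nat (d - k) * t ^ (d - k) :: complex)"
      by (cases "d - k") auto
    have 3: "(of_nat k + of_nat (d - k) :: complex) = of_nat d" using kd by (simp flip: of_nat_add)
    have "s * (of_nat k * c k * s ^ (k - 1) * t ^ (d - k)) + t * (of_nat (d - k) * c k * s ^ k * t ^ (d - k - 1))
       = c k * t ^ (d - k) * (of_nat k * (s * s ^ (k - 1))) + c k * s ^ k * (of_nat (d - k) * (t * t ^ (d - k - 1)))"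
      by (simp add: algebra_simps)
    also have "\<dots> = (of_nat k + of_nat (d - k)) * (c k * s ^ k * t ^ (d - k))"
      unfolding 1 2 by (simp add: algebra_simps)
    also have "\<dots> = of_nat d * (c k * s ^ k * t ^ (d - k))" unfolding 3 ..
    finally show "s * (of_nat k * c k * s ^ (k - 1) * t ^ (d - k)) + t * (of_nat (d - k) * c k * s ^ k * t ^ (d - k - 1))
       = of_nat d * (c k * s ^ k * t ^ (d - k))" .
  qed
  also have "\<dots> = of_nat d * bf d c s t" unfolding bf_def by (simp add: sum_distrib_left mult.assoc)
  finally show ?thesis .
qed


lemma weighted_zero:
  fixes M :: "nat \<Rightarrow> nat \<Rightarrow> complex" and A :: "nat \<Rightarrow> complex"
  assumes sym: "\<And>i j. i < 3 \<Longrightarrow> j < 3 \<Longrightarrow> M i j = M j i" and k: "kerM M x"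
  shows "(\<Sum>i<3. \<Sum>j<3. (A i + A j + E) * M i j * x i * x j) = 0"
proof -
  have r: "\<And>i. i < 3 \<Longrightarrow> (\<Sum>j<3. M i j * x j) = 0" using k unfolding kerM_def by blast
  have r': "\<And>j. j < 3 \<Longrightarrow> (\<Sum>i<3. M i j * x i) = 0"
  proof -
    fix j :: nat assume j: "j < 3"
    have "(\<Sum>i<3. M i j * x i) = (\<Sum>i<3. M j i * x i)" by (rule sum.cong) (auto simp: sym j)
    then show "(\<Sum>i<3. M i j * x i) = 0" using r[OF j] by simp
  qed
  have s2: "(\<Sum>i<3. \<Sum>j<3. A j * x j * (M i j * x i)) = 0"
  proof -
    have "(\<Sum>i<3. \<Sum>j<3. A j * x j * (M i j * x i)) = (\<Sum>j<3. \<Sum>i<3. A j * x j * (M i j * x i))"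
      by (rule sum.swap)
    also have "\<dots> = (\<Sum>j<3. A j * x j * (\<Sum>i<3. M i j * x i))"
      by (simp only: sum_distrib_left)
    also have "\<dots> = 0" using r' by simp
    finally show ?thesis .
  qed
  have "(\<Sum>i<3. \<Sum>j<3. (A i + A j + E) * M i j * x i * x j)
     = (\<Sum>i<3. \<Sum>j<3. (A i + E) * x i * (M i j * x j) + A j * x j * (M i j * x i))"
    by (intro sum.cong refl) (simp add: algebra_simps)
  also have "\<dots> = (\<Sum>i<3. (A i + E) * x i * (\<Sum>j<3. M i j * x j)) + (\<Sum>i<3. \<Sum>j<3. A j * x j * (M i j * x i))"
    by (simp only: sum.distrib sum_distrib_left)
  also have "\<dots> = 0" using r s2 by simp
  finally show ?thesis .
qed


lemma qf_ker: "kerM M x \<Longrightarrow> qf M x = 0"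
proof -
  assume k: "kerM M x"
  have "qf M x = (\<Sum>i<3. x i * (\<Sum>j<3. M i j * x j))"
    unfolding qf_def by (simp add: sum_distrib_left algebra_simps)
  also have "\<dots> = 0" using k unfolding kerM_def by simp
  finally show ?thesis .
qed

lemma rowsum2:
  fixes M :: "nat \<Rightarrow> nat \<Rightarrow> complex"
  assumes sym: "\<And>i j. i < 3 \<Longrightarrow> j < 3 \<Longrightarrow> M i j = M j i" and "i < 3"
  shows "(\<Sum>j<3. (M i j + M j i) * x j) = 2 * (\<Sum>j<3. M i j * x j)"
proof -
  have "(\<Sum>j<3. (M i j + M j i) * x j) = (\<Sum>j<3. 2 * (M i j * x j))"
    by (rule sum.cong) (use sym assms(2) in auto)
  then show ?thesis by (simp add: sum_distrib_left)
qed

lemma lin3: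
  assumes "i < (3::nat)" "j < 3" "k < 3" "i \<noteq> j" "i \<noteq> k" "j \<noteq> k"
  shows "(\<Sum>l<3. (if l = j then a else if l = k then b else if l = i then cc else 0) * x l)
     = cc * x i + a * x j + b * x k"
  using assms by (simp add: sum3ijk[OF assms])

lemma ker_scale:
  assumes "kerM M x" shows "kerM M (\<lambda>l. x l / t)"
  unfolding kerM_def
proof (intro allI impI)
  fix r :: nat assume "r < 3"
  then have "(\<Sum>s<3. M r s * x s) = 0" using assms unfolding kerM_def by blast
  moreover have "(\<Sum>s<3. M r s * (x s / t)) = (\<Sum>s<3. M r s * x s) / t"
    by (simp add: sum_divide_distrib)
  ultimately show "(\<Sum>s<3. M r s * (x s / t)) = 0" by simp
qed



theorem lemma4p6:
  fixes K :: "complex set" and a1 a2 e :: nat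
    and c :: "nat \<Rightarrow> nat \<Rightarrow> nat \<Rightarrow> complex" and \<theta> :: complex
  assumes "number_field K"
    and "\<forall>i<3. \<forall>j<3. \<forall>k\<le>wdeg a1 a2 e i j. c i j k \<in> ring_of_integers K"
    and "\<forall>i<3. \<forall>j<3. \<forall>k\<le>wdeg a1 a2 e i j. c i j k = c j i k"
    and "smooth_X a1 a2 e c"
    and "Delta a1 a2 e c 1 0 \<noteq> 0"
    and "Delta a1 a2 e c \<theta> 1 = 0"
  shows "delta_p_at a1 a2 e c \<theta> \<noteq> 0 \<and>
    (conic_split (gen_field K \<theta>) (fibre_conic a1 a2 e c \<theta>) \<longleftrightarrow>
       (\<exists>y\<in>gen_field K \<theta>. y ^ 2 = delta_p_at a1 a2 e c \<theta>))"
proof -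
  define M where "M = fibre_conic a1 a2 e c \<theta>"
  define N where "N = (\<lambda>i j. bf_ds (wdeg a1 a2 e i j) (c i j) \<theta> 1)"
  define Nt where "Nt = (\<lambda>i j. bf_dt (wdeg a1 a2 e i j) (c i j) \<theta> 1)"
  define L where "L = gen_field K \<theta>"
  have Lsf: "is_subfield L" unfolding L_def by (rule gen_field_subfield)
  have Mij: "\<And>i j. M i j = bf (wdeg a1 a2 e i j) (c i j) \<theta> 1"
    unfolding M_def fibre_conic_def fij_def by simp
  have wsym: "\<And>i j. wdeg a1 a2 e i j = wdeg a1 a2 e j i" unfolding wdeg_def by simp
  have sym: "\<And>i j. i < 3 \<Longrightarrow> j < 3 \<Longrightarrow> M i j = M j i"
  proof -
    fix i j :: nat assume ij: "i < 3" "j < 3"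
    show "M i j = M j i" unfolding Mij bf_def wsym[of i j]
      by (rule sum.cong) (use assms(3) ij wsym[of i j] in auto)
  qed
  have MinL: "\<And>i j. i < 3 \<Longrightarrow> j < 3 \<Longrightarrow> M i j \<in> L"
  proof -
    fix i j :: nat assume ij: "i < 3" "j < 3"
    have cK: "\<And>k. k \<le> wdeg a1 a2 e i j \<Longrightarrow> c i j k \<in> L"
      using assms(2) ij gen_field_K[of K \<theta>] unfolding ring_of_integers_def L_def by blast
    have thL: "\<theta> \<in> L" unfolding L_def by (rule gen_field_th)
    show "M i j \<in> L" unfolding Mij bf_def
      by (rule sf_sum[OF Lsf]) (auto intro!: sf_mult[OF Lsf] sf_power[OF Lsf] cK thL)
  qed
  have det: "det3 M = 0" using assms(6) unfolding Delta_def M_def fibre_conic_def by simp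
  have euler: "\<And>x. \<theta> * qf N x + qf Nt x = (\<Sum>i<3. \<Sum>j<3. of_nat (wdeg a1 a2 e i j) * M i j * x i * x j)"
  proof -
    fix x
    have "\<theta> * qf N x + qf Nt x = (\<Sum>i<3. \<Sum>j<3. (\<theta> * N i j + 1 * Nt i j) * x i * x j)"
      unfolding qf_def by (simp add: sum_distrib_left sum.distrib algebra_simps)
    also have "\<dots> = (\<Sum>i<3. \<Sum>j<3. of_nat (wdeg a1 a2 e i j) * M i j * x i * x j)"
      unfolding N_def Nt_def bf_euler Mij ..
    finally show "\<theta> * qf N x + qf Nt x = (\<Sum>i<3. \<Sum>j<3. of_nat (wdeg a1 a2 e i j) * M i j * x i * x j)" .
  qed
  have nv: "\<forall>x. nz x \<and> kerM M x \<longrightarrow> qf N x \<noteq> 0"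
  proof (intro allI impI)
    fix x assume x: "nz x \<and> kerM M x"
    have "(\<Sum>i<3. \<Sum>j<3. of_nat (wdeg a1 a2 e i j) * M i j * x i * x j)
       = (\<Sum>i<3. \<Sum>j<3. (of_nat (aidx a1 a2 i) + of_nat (aidx a1 a2 j) + of_nat e) * M i j * x i * x j)"
      unfolding wdeg_def by simp
    also have "\<dots> = 0" by (rule weighted_zero) (use sym x in auto)
    finally have e0: "\<theta> * qf N x + qf Nt x = 0" using euler by simp
    have Qf: "Qform a1 a2 e c \<theta> 1 x = 0"
      using qf_ker[of M x] x unfolding qf_def Qform_def M_def fibre_conic_def by simp
    have Qdx: "\<forall>m<3. Q_dx a1 a2 e c \<theta> 1 x m = 0"
    proof (intro allI impI)
      fix m :: nat assume m: "m < 3"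
      have "Q_dx a1 a2 e c \<theta> 1 x m = (\<Sum>j<3. (M m j + M j m) * x j)"
        unfolding Q_dx_def M_def fibre_conic_def ..
      also have "\<dots> = 2 * (\<Sum>j<3. M m j * x j)" by (rule rowsum2[OF sym m])
      also have "\<dots> = 0" using x m unfolding kerM_def by simp
      finally show "Q_dx a1 a2 e c \<theta> 1 x m = 0" .
    qed
    have "Q_ds a1 a2 e c \<theta> 1 x \<noteq> 0 \<or> Q_dt a1 a2 e c \<theta> 1 x \<noteq> 0"
      using assms(4) x Qf Qdx unfolding smooth_X_def nz_def by auto
    then have "qf N x \<noteq> 0 \<or> qf Nt x \<noteq> 0" unfolding Q_ds_def Q_dt_def qf_def N_def Nt_def .
    then show "qf N x \<noteq> 0" using e0 by auto
  qed
  have sing_iff: "\<And>x. conic_sing_pt M x \<longleftrightarrow> nz x \<and> kerM M x"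
  proof -
    fix x
    have rs: "\<And>i. i < 3 \<Longrightarrow> (\<Sum>j<3. (M i j + M j i) * x j) = 2 * (\<Sum>j<3. M i j * x j)"
      by (rule rowsum2[OF sym])
    have cv: "conic_val M x = qf M x" unfolding conic_val_def qf_def ..
    show "conic_sing_pt M x \<longleftrightarrow> nz x \<and> kerM M x"
      unfolding conic_sing_pt_def cv nz_def kerM_def using rs qf_ker[of M x]
      unfolding kerM_def by auto
  qed
  obtain x0 where x0: "nz x0" "kerM M x0" using ker_exists[OF det] by blast
  define i where "i = sing_index M"
  have exn: "\<exists>n x. conic_sing_pt M x \<and> x n \<noteq> 0 \<and> (\<forall>l<n. x l = 0) \<and> n < 3"
  proof (cases "x0 0 \<noteq> 0")
    case True then show ?thesis using x0 sing_iff by (intro exI[of _ 0] exI[of _ x0]) auto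
  next
    case F: False
    show ?thesis
    proof (cases "x0 1 \<noteq> 0")
      case True then show ?thesis using F x0 sing_iff by (intro exI[of _ 1] exI[of _ x0]) (auto simp: less_Suc_eq)
    next
      case False
      obtain l where l: "l < 3" "x0 l \<noteq> 0" using x0(1) unfolding nz_def by blast
      then have "l = 0 \<or> l = 1 \<or> l = 2" by arith
      then have "x0 2 \<noteq> 0" using F False l by auto
      then show ?thesis using F False x0 sing_iff
        by (intro exI[of _ 2] exI[of _ x0]) (auto simp: less_Suc_eq numeral_2_eq_2)
    qed
  qed
  then obtain n xn where xn: "conic_sing_pt M xn" "xn n \<noteq> 0" "\<forall>l<n. xn l = 0" "n < 3" by blast
  have Pi: "\<exists>x. conic_sing_pt M x \<and> x i \<noteq> 0 \<and> (\<forall>l<i. x l = 0)"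
    unfolding i_def sing_index_def by (rule LeastI[of _ n]) (use xn in blast)
  have "i \<le> n" unfolding i_def sing_index_def by (rule Least_le) (use xn in blast)
  then have i3: "i < 3" using xn(4) by simp
  obtain P0 where P0: "conic_sing_pt M P0" "P0 i \<noteq> 0" using Pi by blast
  define P where "P = (\<lambda>l. P0 l / P0 i)"
  have P1: "P i = 1" unfolding P_def using P0(2) by simp
  have Pker: "kerM M P" unfolding P_def by (rule ker_scale) (use P0(1) sing_iff in blast)
  have Pnz: "nz P" using P1 i3 unfolding nz_def by (intro exI[of _ i]) simp
  define j where "j = fst (other_idx i)"
  define k where "k = snd (other_idx i)"
  have ijk: "j < 3" "k < 3" "i \<noteq> j" "i \<noteq> k" "j \<noteq> k"
    using i3 unfolding j_def k_def other_idx_def by (auto simp: less_Suc_eq numeral_3_eq_3)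
  have oi: "other_idx i = (j, k)" unfolding j_def k_def by simp
  have delta: "delta_p_at a1 a2 e c \<theta> = (M j k + M k j)^2 - 4 * M j j * M k k"
    unfolding delta_p_at_def disc_restr_def M_def[symmetric] i_def[symmetric] oi
    unfolding M_def fibre_conic_def by simp
  have row: "\<And>r. r < 3 \<Longrightarrow> M r i + M r j * P j + M r k * P k = 0"
  proof -
    fix r :: nat assume r: "r < 3"
    have "(\<Sum>s<3. M r s * P s) = 0" using Pker r unfolding kerM_def by blast
    then show "M r i + M r j * P j + M r k * P k = 0"
      unfolding sum3ijk[OF i3 ijk] P1 by simp
  qed
  have sjk: "M k j = M j k" "M i j = M j i" "M i k = M k i" using sym ijk i3 by auto
  define D where "D = (M j k + M k j)^2 - 4 * M j j * M k k"
  have Dne: "D \<noteq> 0"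
  proof
    assume D0: "D = 0"
    have D0': "M j j * M k k = M j k * M j k" using D0 sjk unfolding D_def by (simp add: power2_eq_square algebra_simps)
    obtain wj wk where wjk: "wj \<noteq> 0 \<or> wk \<noteq> 0" "M j j * wj + M j k * wk = 0" "M j k * wj + M k k * wk = 0"
    proof (cases "M j j \<noteq> 0 \<or> M j k \<noteq> 0")
      case True
      show ?thesis by (rule that[of "M j k" "- M j j"]) (use True D0' in \<open>auto simp: algebra_simps\<close>)
    next
      case False
      show ?thesis by (rule that[of 1 0]) (use False in auto)
    qed
    define w where "w = (\<lambda>l. if l = j then wj else if l = k then wk else if l = i then 0 else (0::complex))"
    have wi: "w i = 0" "w j = wj" "w k = wk" unfolding w_def using ijk by auto
    have gam: "M i j * wj + M i k * wk = 0"
    proof -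
      have "M i j * wj + M i k * wk = M j i * wj + M k i * wk" using sjk by simp
      also have "\<dots> = - P j * (M j j * wj + M j k * wk) - P k * (M j k * wj + M k k * wk)"
      proof -
        have e1: "M j i = - (M j j * P j + M j k * P k)"
          using row[OF ijk(1)] by (metis add.assoc eq_neg_iff_add_eq_0)
        have e2: "M k i = - (M j k * P j + M k k * P k)"
          using row[OF ijk(2)] unfolding sjk(1) by (metis add.assoc eq_neg_iff_add_eq_0)
        show ?thesis unfolding e1 e2 by (simp add: algebra_simps)
      qed
      also have "\<dots> = 0" using wjk by simp
      finally show ?thesis .
    qed
    have wker: "kerM M w" unfolding kerM_def
    proof (intro allI impI)
      fix r :: nat assume r: "r < 3"
      have "(\<Sum>s<3. M r s * w s) = M r j * wj + M r k * wk"
        unfolding sum3ijk[OF i3 ijk] wi by simp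
      also have "\<dots> = 0"
      proof -
        have "r = i \<or> r = j \<or> r = k" using r i3 ijk by arith
        then show ?thesis using gam wjk sjk by auto
      qed
      finally show "(\<Sum>s<3. M r s * w s) = 0" .
    qed
    obtain t where t: "\<forall>l<3. w l = t * P l" using ker_line[OF nv Pnz Pker wker] by blast
    have "t = 0" using t i3 wi P1 by auto
    then show False using t ijk wi wjk by auto
  qed
  have e1: "M j i = - (M j j * P j + M j k * P k)"
    using row[OF ijk(1)] by (metis add.assoc eq_neg_iff_add_eq_0)
  have e2: "M k i = - (M j k * P j + M k k * P k)"
    using row[OF ijk(2)] unfolding sjk(1) by (metis add.assoc eq_neg_iff_add_eq_0)
  have ei: "M i i = - (M j i * P j + M k i * P k)"
    using row[OF i3] unfolding sjk(2,3) by (metis add.assoc eq_neg_iff_add_eq_0)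
  define Dl where "Dl = M j j * M k k - M j k * M j k"
  have DDl: "D = - 4 * Dl" unfolding D_def Dl_def sjk(1) by (simp add: power2_eq_square algebra_simps)
  have Dl0: "Dl \<noteq> 0" using Dne DDl by auto
  have "Dl * P j = M k i * M j k - M j i * M k k" unfolding Dl_def e1 e2 by (simp add: algebra_simps)
  then have Pj: "P j = (M k i * M j k - M j i * M k k) / Dl" using Dl0 by (simp add: field_simps)
  have "Dl * P k = M j i * M j k - M k i * M j j" unfolding Dl_def e1 e2 by (simp add: algebra_simps)
  then have Pk: "P k = (M j i * M j k - M k i * M j j) / Dl" using Dl0 by (simp add: field_simps)
  have MjjL: "M j j \<in> L" "M j k \<in> L" "M k j \<in> L" "M k k \<in> L" "M j i \<in> L" "M k i \<in> L"
    using MinL ijk i3 by auto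
  have DlL: "Dl \<in> L" unfolding Dl_def using MjjL by (intro sf_diff[OF Lsf] sf_mult[OF Lsf]) auto
  have PjL: "P j \<in> L" unfolding Pj using MjjL DlL
    by (intro sf_divide[OF Lsf] sf_diff[OF Lsf] sf_mult[OF Lsf]) auto
  have PkL: "P k \<in> L" unfolding Pk using MjjL DlL
    by (intro sf_divide[OF Lsf] sf_diff[OF Lsf] sf_mult[OF Lsf]) auto
  define al where "al = M j j"
  define be where "be = M j k + M k j"
  define ga where "ga = M k k"
  have Dbe: "D = be^2 - 4 * al * ga" unfolding D_def al_def be_def ga_def ..
  have fac: "\<And>x. conic_val M x = al * (x j - P j * x i)^2 + be * (x j - P j * x i) * (x k - P k * x i)
                 + ga * (x k - P k * x i)^2"
  proof -
    fix x
    have "conic_val M x = (M i i * x i * x i + M i j * x i * x j + M i k * x i * x k) +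
       (M j i * x j * x i + M j j * x j * x j + M j k * x j * x k) +
       (M k i * x k * x i + M k j * x k * x j + M k k * x k * x k)"
      unfolding conic_val_def sum3ijk[OF i3 ijk] ..
    also have "\<dots> = al * (x j - P j * x i)^2 + be * (x j - P j * x i) * (x k - P k * x i)
                 + ga * (x k - P k * x i)^2"
      unfolding ei sjk e1 e2 al_def be_def ga_def by (simp add: algebra_simps power2_eq_square)
    finally show "conic_val M x = al * (x j - P j * x i)^2 + be * (x j - P j * x i) * (x k - P k * x i)
                 + ga * (x k - P k * x i)^2" .
  qed
  have notsmooth: "\<not> conic_smooth M" unfolding conic_smooth_def using sing_iff Pnz Pker by blast
  have fwd: "\<exists>y\<in>L. y ^ 2 = D" if sp: "conic_split L M"
  proof -
    obtain u v where uv: "\<forall>l<3. u l \<in> L \<and> v l \<in> L"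
      "\<forall>x. conic_val M x = (\<Sum>l<3. u l * x l) * (\<Sum>l<3. v l * x l)"
      using sp notsmooth unfolding conic_split_def by blast
    define ej where "ej = (\<lambda>l. if l = j then 1 else (0::complex))"
    define ek where "ek = (\<lambda>l. if l = k then 1 else (0::complex))"
    define ejk where "ejk = (\<lambda>l. if l = j \<or> l = k then 1 else (0::complex))"
    have "conic_val M ej = al" unfolding fac ej_def using ijk by simp
    moreover have "conic_val M ej = u j * v j" using uv(2)[rule_format, of ej] ijk unfolding sum3ijk[OF i3 ijk] ej_def by simp
    ultimately have h1: "al = u j * v j" by simp
    have "conic_val M ek = ga" unfolding fac ek_def using ijk by simp
    moreover have "conic_val M ek = u k * v k" using uv(2)[rule_format, of ek] ijk unfolding sum3ijk[OF i3 ijk] ek_def by simp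
    ultimately have h2: "ga = u k * v k" by simp
    have "conic_val M ejk = al + be + ga" unfolding fac ejk_def using ijk by simp
    moreover have "conic_val M ejk = (u j + u k) * (v j + v k)" using uv(2)[rule_format, of ejk] ijk unfolding sum3ijk[OF i3 ijk] ejk_def by simp
    ultimately have h3: "be = u j * v k + u k * v j" using h1 h2 by (simp add: algebra_simps)
    have "D = (u j * v k - u k * v j)^2" unfolding Dbe h1 h2 h3 by (simp add: algebra_simps power2_eq_square)
    moreover have "u j * v k - u k * v j \<in> L" using uv(1) ijk
      by (intro sf_diff[OF Lsf] sf_mult[OF Lsf]) auto
    ultimately show ?thesis by metis
  qed
  have alL: "al \<in> L" "be \<in> L" "ga \<in> L" unfolding al_def be_def ga_def using MjjL
    by (auto intro: sf_add[OF Lsf])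
  have twoL: "(2::complex) \<in> L" by (rule sf_numeral[OF Lsf])
  have bwd: "conic_split L M" if y: "y \<in> L" "y^2 = D" for y
  proof (cases "al = 0")
    case False
    define u where "u = (\<lambda>l. if l = j then al else if l = k then (be - y)/2 else if l = i then -(al * P j) - (be - y)/2 * P k else 0)"
    define v where "v = (\<lambda>l. if l = j then 1 else if l = k then (be + y)/(2*al) else if l = i then - P j - (be + y)/(2*al) * P k else 0)"
    have su: "\<And>x. (\<Sum>l<3. u l * x l) = al * (x j - P j * x i) + (be - y)/2 * (x k - P k * x i)"
      unfolding u_def lin3[OF i3 ijk] by (simp add: algebra_simps)
    have sv: "\<And>x. (\<Sum>l<3. v l * x l) = (x j - P j * x i) + (be + y)/(2*al) * (x k - P k * x i)"
      unfolding v_def lin3[OF i3 ijk] using False by (simp add: field_simps)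
    have yy: "(be - y) * (be + y) = 4 * al * ga" using y(2) unfolding Dbe by (simp add: algebra_simps power2_eq_square)
    have prod: "(al * U + (be - y)/2 * V) * (U + (be + y)/(2*al) * V) = al * U^2 + be*U*V + ga*V^2" for U V
    proof -
      have "(al * U + (be - y)/2 * V) * (U + (be + y)/(2*al) * V)
          = al * U^2 + be * U * V + ((be - y) * (be + y)) / (4 * al) * V^2"
        using False by (simp add: field_simps power2_eq_square)
      also have "\<dots> = al * U^2 + be*U*V + ga*V^2" unfolding yy using False by simp
      finally show ?thesis .
    qed
    have uL: "\<forall>l<3. u l \<in> L \<and> v l \<in> L" unfolding u_def v_def using alL y(1) PjL PkL twoL
      by (auto intro!: sf_add[OF Lsf] sf_diff[OF Lsf] sf_mult[OF Lsf] sf_divide[OF Lsf] sf_uminus[OF Lsf] sf_0[OF Lsf] sf_1[OF Lsf])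
    have unz: "\<exists>l<3. u l \<noteq> 0" using False ijk unfolding u_def by (intro exI[of _ j]) auto
    have vnz: "\<exists>l<3. v l \<noteq> 0" using ijk unfolding v_def by (intro exI[of _ j]) auto
    have "\<forall>x. conic_val M x = (\<Sum>l<3. u l * x l) * (\<Sum>l<3. v l * x l)"
      unfolding su sv fac prod by simp
    then show ?thesis unfolding conic_split_def using uL unz vnz by blast
  next
    case True
    have be0: "be \<noteq> 0" using Dne unfolding Dbe True by simp
    define u where "u = (\<lambda>l. if l = j then 0 else if l = k then 1 else if l = i then - P k else (0::complex))"
    define v where "v = (\<lambda>l. if l = j then be else if l = k then ga else if l = i then -(be * P j) - ga * P k else 0)"
    have su: "\<And>x. (\<Sum>l<3. u l * x l) = (x k - P k * x i)"
      unfolding u_def lin3[OF i3 ijk] by (simp add: algebra_simps)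
    have sv: "\<And>x. (\<Sum>l<3. v l * x l) = be * (x j - P j * x i) + ga * (x k - P k * x i)"
      unfolding v_def lin3[OF i3 ijk] by (simp add: algebra_simps)
    have uL: "\<forall>l<3. u l \<in> L \<and> v l \<in> L" unfolding u_def v_def using alL y(1) PjL PkL twoL
      by (auto intro!: sf_add[OF Lsf] sf_diff[OF Lsf] sf_mult[OF Lsf] sf_divide[OF Lsf] sf_uminus[OF Lsf] sf_0[OF Lsf] sf_1[OF Lsf])
    have unz: "\<exists>l<3. u l \<noteq> 0" using ijk unfolding u_def by (intro exI[of _ k]) auto
    have vnz: "\<exists>l<3. v l \<noteq> 0" using be0 ijk unfolding v_def by (intro exI[of _ j]) auto
    have "\<forall>x. conic_val M x = (\<Sum>l<3. u l * x l) * (\<Sum>l<3. v l * x l)"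
      unfolding su sv fac True by (simp add: algebra_simps power2_eq_square)
    then show ?thesis unfolding conic_split_def using uL unz vnz by blast
  qed
  have dD: "delta_p_at a1 a2 e c \<theta> = D" unfolding delta D_def ..
  show ?thesis unfolding dD M_def[symmetric] L_def[symmetric] using Dne fwd bwd by blast
qed

end
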